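(* Let $F:\mathbb{R}^n\to\mathbb{R}$ be convex and $1$-smooth, let $x^\star$ be a minimizer of $F$ and $F^\star=F(x^\star)$. Let $k\ge1$, $N=2^k-1$, and let $(h_0,\dots,h_{N-1})=\pi_k$ be the silver stepsize schedule. For $x^0\in\mathbb{R}^n$ and $x^{i+1}=x^i-h_i\nabla F(x^i)$, $i=0,\dots,N-1$, we have $$F(x^N)-F^\star\le\frac{1}{4\rho^k-2}\,\|x^0-x^\star\|^2,$$ where $\rho=1+\sqrt2$.
   Context: A differentiable convex function $F$ is $1$-smooth if $\nabla F$ is $1$-Lipschitz. The silver ratio is $\rho=1+\sqrt2$. The silver stepsize schedule $\pi_k\in\mathbb{R}^{2^k-1}$ is defined recursively by $\pi_1=(\sqrt2)$ and $\pi_{k+1}=(\pi_k,\ 1+\rho^{k-1},\ \pi_k)$ (concatenation). *)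

theory Defs
  imports "HOL-Analysis.Analysis"
begin

definition silver_ratio :: real where
  "silver_ratio = 1 + sqrt 2"

text \<open>Silver stepsize schedule pi_k, of length 2^k - 1 (pi_0 is unused, set to the empty list).\<close>
fun silver_sched :: "nat \<Rightarrow> real list" where
  "silver_sched 0 = []"
| "silver_sched (Suc 0) = [sqrt 2]"
| "silver_sched (Suc (Suc k)) =
     silver_sched (Suc k) @ [1 + silver_ratio ^ k] @ silver_sched (Suc k)"

end

theory Submission
  imports Defs
begin

definition Qv :: "real \<Rightarrow> real \<Rightarrow> 'a::real_inner \<Rightarrow> 'a \<Rightarrow> 'a \<Rightarrow> 'a \<Rightarrow> real" where
 "Qv fu fv gu gv u v = fu - fv - gv \<bullet> (u - v) - (norm (gu - gv))\<^sup>2 / 2"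
definition Ev :: "real \<Rightarrow> 'a::real_inner \<Rightarrow> 'a \<Rightarrow> real \<Rightarrow> 'a \<Rightarrow> 'a \<Rightarrow> real \<Rightarrow> 'a \<Rightarrow> real" where
 "Ev S xp xq fq gq y fy gy = (norm (xp - y))\<^sup>2/2 - (norm (xq - y))\<^sup>2/2 - S*(fq - fy)
    - S*(1+S)/2*(norm gq)\<^sup>2 - S/2*(norm gy)\<^sup>2 + gy \<bullet> (xp - xq)"

lemma line_deriv:
  fixes G :: "'a::real_inner \<Rightarrow> real"
  assumes der: "\<And>y. (G has_derivative (\<lambda>h. D y \<bullet> h)) (at y)"
  shows "((\<lambda>t. G (v + t *\<^sub>R d)) has_real_derivative (D (v + t *\<^sub>R d) \<bullet> d)) (at t)"
proof -
  have l: "((\<lambda>t. v + t *\<^sub>R d) has_derivative (\<lambda>s. s *\<^sub>R d)) (at t)"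
    by (auto intro!: derivative_eq_intros)
  have "((\<lambda>t. G (v + t *\<^sub>R d)) has_derivative (\<lambda>s. D (v + t *\<^sub>R d) \<bullet> (s *\<^sub>R d))) (at t)"
    by (rule has_derivative_compose[OF l der])
  moreover have "(\<lambda>s. D (v + t *\<^sub>R d) \<bullet> (s *\<^sub>R d)) = (*) (D (v + t *\<^sub>R d) \<bullet> d)"
    by (auto simp: fun_eq_iff)
  ultimately show ?thesis unfolding has_field_derivative_def by simp
qed

lemma descent:
  fixes G :: "'a::real_inner \<Rightarrow> real"
  assumes der: "\<And>y. (G has_derivative (\<lambda>h. D y \<bullet> h)) (at y)"
    and lip: "\<And>y z. norm (D y - D z) \<le> norm (y - z)"
  shows "G u \<le> G v + D v \<bullet> (u - v) + (norm (u - v))\<^sup>2 / 2"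
proof -
  define d where "d = u - v"
  define \<phi> where "\<phi> t = G (v + t *\<^sub>R d) - t * (D v \<bullet> d) - t^2/2 * (norm d)^2" for t
  have dphi: "(\<phi> has_real_derivative (D (v + t *\<^sub>R d) \<bullet> d - D v \<bullet> d - t * (norm d)^2)) (at t)" for t
  proof -
    have h2: "((\<lambda>t. t * (D v \<bullet> d)) has_real_derivative (D v \<bullet> d)) (at t)"
      by (auto intro!: derivative_eq_intros)
    have h3: "((\<lambda>t. t^2/2 * (norm d)^2) has_real_derivative (t * (norm d)^2)) (at t)"
      by (auto intro!: derivative_eq_intros)
    show ?thesis unfolding \<phi>_def
      by (intro DERIV_diff line_deriv[OF der] h2 h3)
  qed
  have "\<phi> 1 \<le> \<phi> 0"
  proof (rule DERIV_nonpos_imp_nonincreasing[of 0 1 \<phi>])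
    fix t :: real assume t: "0 \<le> t" "t \<le> 1"
    have "D (v + t *\<^sub>R d) \<bullet> d - D v \<bullet> d = (D (v + t *\<^sub>R d) - D v) \<bullet> d"
      by (simp add: inner_diff_left)
    also have "\<dots> \<le> norm (D (v + t *\<^sub>R d) - D v) * norm d"
      by (rule norm_cauchy_schwarz)
    also have "\<dots> \<le> norm (t *\<^sub>R d) * norm d"
      using lip[of "v + t *\<^sub>R d" v] by (simp add: mult_right_mono)
    also have "\<dots> = t * (norm d)^2" using t by (simp add: power2_eq_square)
    finally show "\<exists>y. (\<phi> has_real_derivative y) (at t) \<and> y \<le> 0"
      using dphi by force
  qed simp
  then show ?thesis unfolding \<phi>_def d_def by simp
qed

lemma convex_grad:
  fixes G :: "'a::real_inner \<Rightarrow> real"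
  assumes der: "\<And>y. (G has_derivative (\<lambda>h. D y \<bullet> h)) (at y)"
    and cvx: "convex_on UNIV G"
  shows "G v + D v \<bullet> (u - v) \<le> G u"
proof -
  define d where "d = u - v"
  define \<phi> where "\<phi> t = G (v + t *\<^sub>R d)" for t
  have c: "convex_on UNIV \<phi>"
  proof (rule convex_onI)
    fix s a b :: real assume s: "0 < s" "s < 1"
    have "v + ((1 - s) *\<^sub>R a + s *\<^sub>R b) *\<^sub>R d = (1 - s) *\<^sub>R (v + a *\<^sub>R d) + s *\<^sub>R (v + b *\<^sub>R d)"
      by (simp add: algebra_simps)
    then show "\<phi> ((1 - s) *\<^sub>R a + s *\<^sub>R b) \<le> (1 - s) * \<phi> a + s * \<phi> b"
      unfolding \<phi>_def using convex_onD[OF cvx, of s "v + a *\<^sub>R d" "v + b *\<^sub>R d"] s by simp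
  qed simp
  have "(\<phi> has_real_derivative (D v \<bullet> d)) (at 0 within UNIV)"
    using line_deriv[OF der, of v d 0] unfolding \<phi>_def by simp
  from convex_on_imp_above_tangent[OF c _ _ _ this, of 1]
  have "\<phi> 1 - \<phi> 0 \<ge> D v \<bullet> d" by simp
  then show ?thesis unfolding \<phi>_def d_def by simp
qed

lemma cocoercive:
  fixes G :: "'a::real_inner \<Rightarrow> real"
  assumes der: "\<And>y. (G has_derivative (\<lambda>h. D y \<bullet> h)) (at y)"
    and cvx: "convex_on UNIV G"
    and lip: "\<And>y z. norm (D y - D z) \<le> norm (y - z)"
  shows "G v + D v \<bullet> (u - v) + (norm (D u - D v))\<^sup>2 / 2 \<le> G u"
proof -
  define H where "H z = G z - D v \<bullet> z" for z
  define DH where "DH z = D z - D v" for z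
  have derH: "(H has_derivative (\<lambda>h. DH y \<bullet> h)) (at y)" for y
  proof -
    have "(H has_derivative (\<lambda>h. D y \<bullet> h - D v \<bullet> h)) (at y)"
      unfolding H_def by (rule has_derivative_diff[OF der]) (rule bounded_linear_imp_has_derivative[OF bounded_linear_inner_right])
    then show ?thesis unfolding DH_def by (simp add: inner_diff_left)
  qed
  have lipH: "norm (DH y - DH z) \<le> norm (y - z)" for y z
    unfolding DH_def using lip[of y z] by simp
  let ?w = "u - DH u"
  have "H ?w \<le> H u + DH u \<bullet> (?w - u) + (norm (?w - u))\<^sup>2 / 2"
    by (rule descent[OF derH lipH])
  also have "\<dots> = H u - (norm (DH u))\<^sup>2 / 2"
    by (simp add: power2_norm_eq_inner)
  finally have 1: "H ?w \<le> H u - (norm (DH u))\<^sup>2 / 2" .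
  have "G v + D v \<bullet> (?w - v) \<le> G ?w" by (rule convex_grad[OF der cvx])
  then have "H v \<le> H ?w" unfolding H_def by (simp add: inner_diff_right)
  with 1 show ?thesis unfolding H_def DH_def by (simp add: inner_diff_right)
qed

lemma base_id:
  fixes x0 g0 g1 y gy :: "'a::real_inner"
  assumes r: "r*r = 2" and rho: "rho = 1 + r"
  shows "Ev r x0 (x0 - r *\<^sub>R g0) f1 g1 y fy gy =
    r * Qv fy f0 gy g0 y x0 + rho * Qv f0 f1 g0 g1 x0 (x0 - r *\<^sub>R g0) + Qv f1 f0 g1 g0 (x0 - r *\<^sub>R g0) x0"
proof -
  have rr: "\<And>X. r * (r * X) = 2 * X" using r by (metis mult.assoc)
  show ?thesis
  unfolding Qv_def Ev_def rho
  apply (simp add: power2_norm_eq_inner inner_simps inner_commute algebra_simps rr)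
  by (simp add: field_simps)
qed

lemma join_id:
  fixes x0 xn xm y gn gm gy :: "'a::real_inner"
  assumes r: "rho*rho = 2*rho+1"
  shows "Ev (rho*rho*t - 1) x0 xm fm gm y fy gy =
    Ev (rho*t-1) x0 xn fn gn y fy gy + Ev (rho*t-1) (xn - (1+t) *\<^sub>R gn) xm fm gm y fy gy
    + (1+t) * Qv fy fn gy gn y xn + rho * Qv fn fm gn gm xn xm + rho*t* Qv fm fn gm gn xm xn
    + rho * Ev (rho*t-1) (xn - (1+t) *\<^sub>R gn) xm fm gm xn fn gn
    + rho * Ev (rho*t-1) (xn - (1+t) *\<^sub>R gn) xm fm gm xm fm gm"
proof -
  have rr: "\<And>X. rho * (rho * X) = 2 * (rho * X) + X" using r by (metis mult.assoc distrib_right mult_1)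
  show ?thesis
  unfolding Qv_def Ev_def
  apply (simp add: power2_norm_eq_inner inner_simps inner_commute algebra_simps rr)
  by (simp add: field_simps)
qed

lemma len_silver: "length (silver_sched (Suc k)) = 2 ^ Suc k - 1"
proof (induction k)
  case 0 then show ?case by simp
next
  case (Suc k)
  have "(2::nat) ^ Suc k \<ge> 1" by simp
  then show ?case using Suc by simp
qed

lemma rho_sq: "silver_ratio * silver_ratio = 2 * silver_ratio + 1"
  unfolding silver_ratio_def by (simp add: algebra_simps)

lemma rho_pos: "silver_ratio > 0"
  unfolding silver_ratio_def by (simp add: add_pos_nonneg)

lemma silver_main:
  fixes F :: "'a::real_inner \<Rightarrow> real" and g :: "'a \<Rightarrow> 'a" and x :: "nat \<Rightarrow> 'a"
  assumes Q: "\<And>u v. Qv (F u) (F v) (g u) (g v) u v \<ge> 0"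
  shows "(\<forall>i < 2 ^ Suc k - 1. x (p + Suc i) = x (p + i) - silver_sched (Suc k) ! i *\<^sub>R g (x (p + i)))
    \<Longrightarrow> Ev (silver_ratio ^ Suc k - 1) (x p) (x (p + (2 ^ Suc k - 1))) (F (x (p + (2 ^ Suc k - 1))))
          (g (x (p + (2 ^ Suc k - 1)))) y (F y) (g y) \<ge> 0"
proof (induction k arbitrary: p y)
  case 0
  have x1: "x (p + 1) = x p - sqrt 2 *\<^sub>R g (x p)" using 0 by simp
  have "Ev (sqrt 2) (x p) (x p - sqrt 2 *\<^sub>R g (x p)) (F (x (p+1))) (g (x (p+1))) y (F y) (g y) =
    sqrt 2 * Qv (F y) (F (x p)) (g y) (g (x p)) y (x p)
    + silver_ratio * Qv (F (x p)) (F (x (p+1))) (g (x p)) (g (x (p+1))) (x p) (x p - sqrt 2 *\<^sub>R g (x p))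
    + Qv (F (x (p+1))) (F (x p)) (g (x (p+1))) (g (x p)) (x p - sqrt 2 *\<^sub>R g (x p)) (x p)"
    by (rule base_id) (auto simp: silver_ratio_def)
  also have "\<dots> \<ge> 0"
    using Q[of y "x p"] Q[of "x p" "x (p+1)"] Q[of "x (p+1)" "x p"] x1 rho_pos
    by (simp add: add_nonneg_nonneg)
  finally show ?case using x1 by (simp add: silver_ratio_def)
next
  case (Suc k)
  define s where "s = silver_sched (Suc k)"
  define L :: nat where "L = 2 ^ Suc k - 1"
  define t where "t = silver_ratio ^ k"
  define \<mu> where "\<mu> = 1 + t"
  have lenL: "length s = L" unfolding s_def L_def by (rule len_silver)
  have Lge: "(2::nat) ^ Suc k \<ge> 1" by simp
  have tot: "2 ^ Suc (Suc k) - 1 = L + 1 + L" unfolding L_def using Lge by simp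
  have sch: "silver_sched (Suc (Suc k)) = s @ [\<mu>] @ s"
    unfolding s_def \<mu>_def t_def by simp
  have hyp: "\<And>i::nat. i < L + 1 + L \<Longrightarrow> x (p + Suc i) = x (p + i) - (s @ [\<mu>] @ s) ! i *\<^sub>R g (x (p + i))"
    using Suc.prems unfolding tot sch by blast
  define n :: nat where "n = p + L"
  define m :: nat where "m = p + L + 1 + L"
  have ha: "\<forall>i < 2 ^ Suc k - 1. x (p + Suc i) = x (p + i) - silver_sched (Suc k) ! i *\<^sub>R g (x (p + i))"
  proof (intro allI impI)
    fix i :: nat assume "i < 2 ^ Suc k - 1"
    then have "i < L" unfolding L_def .
    then show "x (p + Suc i) = x (p + i) - silver_sched (Suc k) ! i *\<^sub>R g (x (p + i))"
      using hyp[of i] lenL by (simp add: nth_append s_def)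
  qed
  have hb: "\<forall>i < 2 ^ Suc k - 1. x ((n+1) + Suc i) = x ((n+1) + i) - silver_sched (Suc k) ! i *\<^sub>R g (x ((n+1) + i))"
  proof (intro allI impI)
    fix i :: nat assume "i < 2 ^ Suc k - 1"
    then have "i < L" unfolding L_def .
    then have "x (p + Suc (L + 1 + i)) = x (p + (L + 1 + i)) - (s @ [\<mu>] @ s) ! (L + 1 + i) *\<^sub>R g (x (p + (L + 1 + i)))"
      by (intro hyp) simp
    moreover have "(s @ [\<mu>] @ s) ! (L + 1 + i) = s ! i" using lenL by (simp add: nth_append)
    ultimately show "x ((n+1) + Suc i) = x ((n+1) + i) - silver_sched (Suc k) ! i *\<^sub>R g (x ((n+1) + i))"
      unfolding n_def s_def by (simp add: add.assoc)
  qed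
  have hmid: "x (n + 1) = x n - (1 + t) *\<^sub>R g (x n)"
    using hyp[of L] lenL unfolding n_def \<mu>_def by (simp add: nth_append)
  have endb: "n + 1 + (2 ^ Suc k - 1) = m" unfolding n_def m_def L_def by simp
  have enda: "p + (2 ^ Suc k - 1) = n" unfolding n_def L_def by simp
  have endt: "p + (2 ^ Suc (Suc k) - 1) = m" unfolding m_def tot by simp
  have Ea: "Ev (silver_ratio ^ Suc k - 1) (x p) (x n) (F (x n)) (g (x n)) y (F y) (g y) \<ge> 0"
    using Suc.IH[OF ha, of y] unfolding enda .
  have Eb: "\<And>z. Ev (silver_ratio ^ Suc k - 1) (x (n+1)) (x m) (F (x m)) (g (x m)) z (F z) (g z) \<ge> 0"
    using Suc.IH[OF hb] unfolding endb by blast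
  have r: "silver_ratio ^ Suc k - 1 = silver_ratio * t - 1" "silver_ratio ^ Suc (Suc k) - 1 = silver_ratio * silver_ratio * t - 1"
    unfolding t_def by (simp_all add: mult.assoc)
  have tpos: "t > 0" unfolding t_def using rho_pos by simp
  have "Ev (silver_ratio ^ Suc (Suc k) - 1) (x p) (x m) (F (x m)) (g (x m)) y (F y) (g y) =
    Ev (silver_ratio*t-1) (x p) (x n) (F (x n)) (g (x n)) y (F y) (g y) + Ev (silver_ratio*t-1) (x n - (1+t) *\<^sub>R g (x n)) (x m) (F (x m)) (g (x m)) y (F y) (g y)
    + (1+t) * Qv (F y) (F (x n)) (g y) (g (x n)) y (x n) + silver_ratio * Qv (F (x n)) (F (x m)) (g (x n)) (g (x m)) (x n) (x m)
    + silver_ratio*t* Qv (F (x m)) (F (x n)) (g (x m)) (g (x n)) (x m) (x n)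
    + silver_ratio * Ev (silver_ratio*t-1) (x n - (1+t) *\<^sub>R g (x n)) (x m) (F (x m)) (g (x m)) (x n) (F (x n)) (g (x n))
    + silver_ratio * Ev (silver_ratio*t-1) (x n - (1+t) *\<^sub>R g (x n)) (x m) (F (x m)) (g (x m)) (x m) (F (x m)) (g (x m))"
    unfolding r(2) by (rule join_id[OF rho_sq])
  also have "\<dots> \<ge> 0"
    using Ea Eb[of y] Eb[of "x n"] Eb[of "x m"] Q[of y "x n"] Q[of "x n" "x m"] Q[of "x m" "x n"]
      rho_pos tpos unfolding r(1) hmid
    by (simp add: add_nonneg_nonneg)
  finally show ?case unfolding endt .
qed

theorem theorem4:
  fixes F :: "'a::euclidean_space \<Rightarrow> real"
    and gradF :: "'a \<Rightarrow> 'a"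
    and xstar :: 'a
    and x :: "nat \<Rightarrow> 'a"
    and k :: nat
  assumes grad: "\<And>y. (F has_derivative (\<lambda>h. gradF y \<bullet> h)) (at y)"
    and cvx: "convex_on UNIV F"
    and smooth: "\<And>y z. norm (gradF y - gradF z) \<le> norm (y - z)"
    and minim: "\<And>y. F xstar \<le> F y"
    and k: "k \<ge> 1"
    and iter: "\<And>i. i < 2 ^ k - 1 \<Longrightarrow>
                 x (Suc i) = x i - (silver_sched k ! i) *\<^sub>R gradF (x i)"
  shows "F (x (2 ^ k - 1)) - F xstar
           \<le> 1 / (4 * silver_ratio ^ k - 2) * (norm (x 0 - xstar))\<^sup>2"
proof -
  obtain j where kj: "k = Suc j" using k by (cases k) auto
  have Q: "\<And>u v. Qv (F u) (F v) (gradF u) (gradF v) u v \<ge> 0"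
    unfolding Qv_def using cocoercive[OF grad cvx smooth] by (simp add: algebra_simps)
  have g0: "gradF xstar = 0"
  proof -
    have "(\<lambda>h. gradF xstar \<bullet> h) = (\<lambda>h. 0)"
      by (rule has_derivative_local_min[OF grad]) (simp add: minim always_eventually)
    then have "gradF xstar \<bullet> gradF xstar = 0" by meson
    then show ?thesis by simp
  qed
  define N :: nat where "N = 2 ^ k - 1"
  define S where "S = silver_ratio ^ k - 1"
  have it: "\<forall>i < 2 ^ Suc j - 1. x (0 + Suc i) = x (0 + i) - silver_sched (Suc j) ! i *\<^sub>R gradF (x (0 + i))"
    using iter unfolding kj by simp
  have E: "Ev S (x 0) (x N) (F (x N)) (gradF (x N)) xstar (F xstar) (gradF xstar) \<ge> 0"
    using silver_main[OF Q it, of xstar] unfolding S_def N_def kj by simp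
  have Qs: "Qv (F xstar) (F (x N)) (gradF xstar) (gradF (x N)) xstar (x N) \<ge> 0" by (rule Q)
  have Spos: "S \<ge> 0" unfolding S_def using rho_pos
    by (simp add: silver_ratio_def one_le_power)
  define a where "a = x N - xstar"
  define gN where "gN = gradF (x N)"
  have sq: "0 \<le> (norm (a - (1+S) *\<^sub>R gN))\<^sup>2" by simp
  have sqe: "(norm (a - (1+S) *\<^sub>R gN))\<^sup>2 = (norm a)\<^sup>2 - 2*(1+S) * (gN \<bullet> a) + (1+S)^2 * (norm gN)\<^sup>2"
    unfolding power2_norm_eq_inner by (simp add: inner_simps inner_commute algebra_simps power2_eq_square)
  have E': "(norm (x 0 - xstar))\<^sup>2/2 - (norm a)\<^sup>2/2 - S*(F (x N) - F xstar) - S*(1+S)/2*(norm gN)\<^sup>2 \<ge> 0"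
    using E g0 unfolding Ev_def a_def gN_def by simp
  have Qs': "F xstar - F (x N) + gN \<bullet> a - (norm gN)\<^sup>2/2 \<ge> 0"
    using Qs g0 unfolding Qv_def a_def gN_def by (simp add: inner_diff_right)
  have main: "(1 + 2*S) * (F (x N) - F xstar) \<le> (norm (x 0 - xstar))\<^sup>2/2"
  proof -
    define e1 where "e1 = (norm (x 0 - xstar))\<^sup>2/2 - (norm a)\<^sup>2/2 - S*(F (x N) - F xstar) - S*(1+S)/2*(norm gN)\<^sup>2"
    define e2 where "e2 = F xstar - F (x N) + gN \<bullet> a - (norm gN)\<^sup>2/2"
    have h1: "(1+S) * e2 \<ge> 0" using Qs' Spos unfolding e2_def by simp
    have eq: "(1 + 2*S) * (F (x N) - F xstar) = (norm (x 0 - xstar))\<^sup>2/2 - e1 - (1+S) * e2 - (norm (a - (1+S) *\<^sub>R gN))\<^sup>2/2"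
      unfolding sqe e1_def e2_def apply (simp add: algebra_simps power2_eq_square)
      by (simp add: field_simps)
    show ?thesis using eq h1 E' sq unfolding e1_def[symmetric] by linarith
  qed
  have den: "4 * silver_ratio ^ k - 2 = 2 * (1 + 2*S)" unfolding S_def by simp
  have pos: "1 + 2*S > 0" using Spos by simp
  show ?thesis unfolding den N_def[symmetric] using main pos
    by (simp add: field_simps)
qed

end
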